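(* Let $\alpha,\beta\in\mathbb{C}$ with $(\alpha,\beta)\notin\mathbb{Z}^2$. Then $\mathrm{H}^1(\mathcal{W},\mathcal{F}_\alpha\otimes\mathcal{F}_\beta)=0$ if $\alpha+\beta\neq 1$, and if $\alpha+\beta=1$ then $\mathrm{H}^1(\mathcal{W},\mathcal{F}_{1-\beta}\otimes\mathcal{F}_\beta)$ is one-dimensional, spanned by the class of the 1-cocycle $\mathrm{d}_{1-\beta,\beta}$ defined by $$\mathrm{d}_{1-\beta,\beta}(L_n)=\begin{cases}\sum_{i=0}^{n-1}(i-n\beta)v_i\otimes v_{n-i},&n\geq1;\\ 0,&n=0;\\ -\sum_{i=n}^{-1}(i-n\beta)v_i\otimes v_{n-i},&n\leq -1.\end{cases}$$
   Context: The Witt algebra $\mathcal{W}$ is the complex Lie algebra with basis $\{L_n\mid n\in\mathbb{Z}\}$ and bracket $[L_m,L_n]=(m-n)L_{m+n}$. For $\alpha\in\mathbb{C}$, the tensor density module $\mathcal{F}_\alpha$ has basis $\{v_n\mid n\in\mathbb{Z}\}$ with $L_m\cdot v_n=-(\alpha m+n)v_{m+n}$. The tensor product $\mathcal{F}_\alpha\otimes\mathcal{F}_\beta$ is a $\mathcal{W}$-module via $L_m\cdot(v_i\otimes v_j)=-(i+\alpha m)v_{m+i}\otimes v_j-(j+\beta m)v_i\otimes v_{m+j}$. For a Lie algebra $L$ and $L$-module $M$, $\mathrm{Der}(L,M)$ is the space of 1-cocycles (linear $d:L\to M$ with $d([x,y])=x\cdot d(y)-y\cdot d(x)$), $\mathrm{Inn}(L,M)$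 the space of 1-coboundaries $d_v(x)=x\cdot v$ ($v\in M$), and $\mathrm{H}^1(L,M)=\mathrm{Der}(L,M)/\mathrm{Inn}(L,M)$. *)

theory Defs
  imports Complex_Main
begin

text \<open>Elements of F_alpha tensor F_beta: finitely supported coefficient functions
  u, where u(i,j) is the coefficient of v_i tensor v_j.\<close>
definition fin_supp :: "(int \<times> int \<Rightarrow> complex) \<Rightarrow> bool" where
  "fin_supp u \<longleftrightarrow> finite {p. u p \<noteq> 0}"

text \<open>Action of L_m on F_alpha tensor F_beta:
  L_m (v_i tensor v_j) = -(i + alpha m) v_(m+i) tensor v_j - (j + beta m) v_i tensor v_(m+j).
  Coefficient of v_a tensor v_b in L_m u.\<close>
definition act :: "complex \<Rightarrow> complex \<Rightarrow> int \<Rightarrow> (int \<times> int \<Rightarrow> complex) \<Rightarrow> (int \<times> int \<Rightarrow> complex)" where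
  "act \<alpha> \<beta> m u = (\<lambda>(a, b).
      - (of_int (a - m) + \<alpha> * of_int m) * u (a - m, b)
      - (of_int (b - m) + \<beta> * of_int m) * u (a, b - m))"

text \<open>A linear map d : W \<rightarrow> M is determined by its values D n = d(L_n) on the basis.
  It is a 1-cocycle iff d([L_m,L_n]) = L_m d(L_n) - L_n d(L_m) for all m, n
  (by bilinearity this is equivalent to the cocycle identity on all of W).\<close>
definition is_der :: "complex \<Rightarrow> complex \<Rightarrow> (int \<Rightarrow> int \<times> int \<Rightarrow> complex) \<Rightarrow> bool" where
  "is_der \<alpha> \<beta> D \<longleftrightarrow> (\<forall>n. fin_supp (D n)) \<and>
     (\<forall>m n. (\<lambda>p. of_int (m - n) * D (m + n) p) = (\<lambda>p. act \<alpha> \<beta> m (D n) p - act \<alpha> \<beta> n (D m) p))"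

definition is_inner :: "complex \<Rightarrow> complex \<Rightarrow> (int \<Rightarrow> int \<times> int \<Rightarrow> complex) \<Rightarrow> bool" where
  "is_inner \<alpha> \<beta> D \<longleftrightarrow> (\<exists>v. fin_supp v \<and> (\<forall>n. D n = act \<alpha> \<beta> n v))"

definition dcoc :: "complex \<Rightarrow> int \<Rightarrow> int \<times> int \<Rightarrow> complex" where
  "dcoc \<beta> n = (\<lambda>(a, b).
     if n \<ge> 1 then (if 0 \<le> a \<and> a \<le> n - 1 \<and> b = n - a then of_int a - of_int n * \<beta> else 0)
     else if n = 0 then 0
     else (if n \<le> a \<and> a \<le> -1 \<and> b = n - a then - (of_int a - of_int n * \<beta>) else 0))"

end

theory Submission
  imports Defs
begin

definition der_pt :: "complex \<Rightarrow> complex \<Rightarrow> (int \<Rightarrow> int \<times> int \<Rightarrow> complex) \<Rightarrow> bool" where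
  "der_pt \<alpha> \<beta> D \<longleftrightarrow> (\<forall>m n p. of_int (m - n) * D (m + n) p = act \<alpha> \<beta> m (D n) p - act \<alpha> \<beta> n (D m) p)"

lemma is_der_iff: "is_der \<alpha> \<beta> D \<longleftrightarrow> (\<forall>n. fin_supp (D n)) \<and> der_pt \<alpha> \<beta> D"
  unfolding is_der_def der_pt_def fun_eq_iff by auto

lemma act_ab: "act \<alpha> \<beta> m u (a, b) = - (of_int (a - m) + \<alpha> * of_int m) * u (a - m, b)
      - (of_int (b - m) + \<beta> * of_int m) * u (a, b - m)"
  by (simp add: act_def)

lemma act_diff: "act \<alpha> \<beta> m (\<lambda>p. u p - v p) p = act \<alpha> \<beta> m u p - act \<alpha> \<beta> m v p"
  by (cases p) (simp add: act_ab algebra_simps)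

lemma act_add: "act \<alpha> \<beta> m (\<lambda>p. u p + v p) p = act \<alpha> \<beta> m u p + act \<alpha> \<beta> m v p"
  by (cases p) (simp add: act_ab algebra_simps)

lemma act_scale: "act \<alpha> \<beta> m (\<lambda>p. c * u p) p = c * act \<alpha> \<beta> m u p"
  by (cases p) (simp add: act_ab algebra_simps)

lemma act_zero: "act \<alpha> \<beta> m (\<lambda>p. 0) p = 0"
  by (cases p) (simp add: act_ab)

lemma act_module: "act \<alpha> \<beta> m (act \<alpha> \<beta> n v) p - act \<alpha> \<beta> n (act \<alpha> \<beta> m v) p
   = of_int (m - n) * act \<alpha> \<beta> (m + n) v p"
proof (cases p)
  case (Pair a b)
  have e1: "a - m - n = a - (m + n)" "a - n - m = a - (m+n)" "b - m - n = b - (m+n)" "b - n - m = b - (m+n)" by auto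
  show ?thesis unfolding Pair act_ab e1 by (simp add: algebra_simps)
qed

lemma fin_supp_act: assumes "fin_supp u" shows "fin_supp (act \<alpha> \<beta> m u)"
proof -
  let ?S = "{p. u p \<noteq> 0}"
  have "{p. act \<alpha> \<beta> m u p \<noteq> 0} \<subseteq> (\<lambda>(a,b). (a+m,b)) ` ?S \<union> (\<lambda>(a,b). (a,b+m)) ` ?S"
  proof
    fix p assume "p \<in> {p. act \<alpha> \<beta> m u p \<noteq> 0}"
    then obtain a b where p: "p = (a,b)" and h: "act \<alpha> \<beta> m u (a,b) \<noteq> 0" by (cases p) auto
    then have "u (a-m,b) \<noteq> 0 \<or> u (a, b-m) \<noteq> 0" by (auto simp: act_ab)
    then show "p \<in> (\<lambda>(a,b). (a+m,b)) ` ?S \<union> (\<lambda>(a,b). (a,b+m)) ` ?S"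
    proof
      assume "u (a-m,b) \<noteq> 0" then show ?thesis unfolding p by (auto intro!: image_eqI[where x="(a-m,b)"])
    next
      assume "u (a,b-m) \<noteq> 0" then show ?thesis unfolding p by (auto intro!: image_eqI[where x="(a,b-m)"])
    qed
  qed
  moreover have "finite ?S" using assms by (simp add: fin_supp_def)
  ultimately show ?thesis unfolding fin_supp_def by (meson finite_UnI finite_imageI finite_subset)
qed

lemma fin_supp_diff: "fin_supp u \<Longrightarrow> fin_supp v \<Longrightarrow> fin_supp (\<lambda>p. u p - v p)"
  unfolding fin_supp_def by (rule finite_subset[of _ "{p. u p \<noteq> 0} \<union> {p. v p \<noteq> 0}"]) auto

lemma fin_supp_add: "fin_supp u \<Longrightarrow> fin_supp v \<Longrightarrow> fin_supp (\<lambda>p. u p + v p)"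
  unfolding fin_supp_def by (rule finite_subset[of _ "{p. u p \<noteq> 0} \<union> {p. v p \<noteq> 0}"]) auto

lemma fin_supp_scale: "fin_supp u \<Longrightarrow> fin_supp (\<lambda>p. c * u p)"
  unfolding fin_supp_def by (rule finite_subset[of _ "{p. u p \<noteq> 0}"]) auto

lemma not_both_int_a: "of_int j + \<alpha> = 0 \<Longrightarrow> \<alpha> \<in> \<int>"
proof -
  assume "of_int j + \<alpha> = 0"
  then have "\<alpha> = of_int (-j)" by (simp add: eq_neg_iff_add_eq_0 add.commute)
  then show ?thesis by simp
qed

lemma int_of_sub: "of_int j - \<alpha> = 0 \<Longrightarrow> (\<alpha>::complex) \<in> \<int>"
proof -
  assume "of_int j - \<alpha> = 0"
  then have "\<alpha> = of_int j" by simp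
  then show ?thesis by simp
qed

lemma inj1:
  assumes fs: "fin_supp u" and z: "\<forall>p. act \<alpha> \<beta> 1 u p = 0" and ni: "\<not> (\<alpha> \<in> \<int> \<and> \<beta> \<in> \<int>)"
  shows "u p = 0"
proof (rule ccontr)
  assume up: "u p \<noteq> 0"
  define S where "S = {p. u p \<noteq> 0}"
  have fS: "finite S" using fs by (simp add: fin_supp_def S_def)
  have pS: "p \<in> S" using up by (simp add: S_def)
  define A where "A = Max (fst ` S)"
  have "A \<in> fst ` S" unfolding A_def using fS pS by (intro Max_in) auto
  then obtain b where Ab: "u (A,b) \<noteq> 0" by (auto simp: S_def)
  have Amax: "u (A+1, b-1) = 0"
  proof (rule ccontr)
    assume "u (A+1, b-1) \<noteq> 0"
    then have "A + 1 \<in> fst ` S" by (force simp: S_def)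
    then have "A + 1 \<le> A" unfolding A_def using Max_ge[OF finite_imageI[OF fS]] by blast
    then show False by simp
  qed
  have "act \<alpha> \<beta> 1 u (A+1, b) = 0" using z by simp
  then have "\<alpha> = - of_int A" using Amax Ab by (auto simp add: act_ab)
  then have "\<alpha> \<in> \<int>" by simp
  define B where "B = Max (snd ` S)"
  have "B \<in> snd ` S" unfolding B_def using fS pS by (intro Max_in) auto
  then obtain a where aB: "u (a,B) \<noteq> 0" by (auto simp: S_def)
  have Bmax: "u (a-1, B+1) = 0"
  proof (rule ccontr)
    assume "u (a-1, B+1) \<noteq> 0"
    then have "B + 1 \<in> snd ` S" by (force simp: S_def)
    then have "B + 1 \<le> B" unfolding B_def using Max_ge[OF finite_imageI[OF fS]] by blast
    then show False by simp
  qed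
  have "act \<alpha> \<beta> 1 u (a, B+1) = 0" using z by simp
  then have "\<beta> = - of_int B" using Bmax aB by (auto simp add: act_ab eq_neg_iff_add_eq_0 add.commute)
  then have "\<beta> \<in> \<int>" by simp
  with \<open>\<alpha> \<in> \<int>\<close> ni show False by simp
qed

lemma injm1:
  assumes fs: "fin_supp u" and z: "\<forall>p. act \<alpha> \<beta> (-1) u p = 0" and ni: "\<not> (\<alpha> \<in> \<int> \<and> \<beta> \<in> \<int>)"
  shows "u p = 0"
proof (rule ccontr)
  assume up: "u p \<noteq> 0"
  define S where "S = {p. u p \<noteq> 0}"
  have fS: "finite S" using fs by (simp add: fin_supp_def S_def)
  have pS: "p \<in> S" using up by (simp add: S_def)
  define A where "A = Min (fst ` S)"
  have "A \<in> fst ` S" unfolding A_def using fS pS by (intro Min_in) auto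
  then obtain b where Ab: "u (A,b) \<noteq> 0" by (auto simp: S_def)
  have Amin: "u (A-1, b+1) = 0"
  proof (rule ccontr)
    assume "u (A-1, b+1) \<noteq> 0"
    then have "A - 1 \<in> fst ` S" by (force simp: S_def)
    then have "A \<le> A - 1" unfolding A_def using Min_le[OF finite_imageI[OF fS]] by blast
    then show False by simp
  qed
  have "act \<alpha> \<beta> (-1) u (A-1, b) = 0" using z by simp
  then have "\<alpha> = of_int A" using Amin Ab by (auto simp add: act_ab)
  then have "\<alpha> \<in> \<int>" by simp
  define B where "B = Min (snd ` S)"
  have "B \<in> snd ` S" unfolding B_def using fS pS by (intro Min_in) auto
  then obtain a where aB: "u (a,B) \<noteq> 0" by (auto simp: S_def)
  have Bmin: "u (a+1, B-1) = 0"
  proof (rule ccontr)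
    assume "u (a+1, B-1) \<noteq> 0"
    then have "B - 1 \<in> snd ` S" by (force simp: S_def)
    then have "B \<le> B - 1" unfolding B_def using Min_le[OF finite_imageI[OF fS]] by blast
    then show False by simp
  qed
  have "act \<alpha> \<beta> (-1) u (a, B-1) = 0" using z by simp
  then have "\<beta> = of_int B" using Bmin aB by (auto simp add: act_ab)
  then have "\<beta> \<in> \<int>" by simp
  with \<open>\<alpha> \<in> \<int>\<close> ni show False by simp
qed

lemma der_inst: "der_pt \<alpha> \<beta> D \<Longrightarrow> of_int (m - n) * D (m + n) p = act \<alpha> \<beta> m (D n) p - act \<alpha> \<beta> n (D m) p"
  unfolding der_pt_def by blast

lemma uniq:
  assumes d: "der_pt \<alpha> \<beta> E" and fs: "\<forall>n. fin_supp (E n)"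
    and z0: "\<forall>p. E 0 p = 0" and z1: "\<forall>p. E 1 p = 0" and ni: "\<not> (\<alpha> \<in> \<int> \<and> \<beta> \<in> \<int>)"
  shows "E n p = 0"
proof -
  have E0: "E 0 = (\<lambda>p. 0)" using z0 by auto
  have E1: "E 1 = (\<lambda>p. 0)" using z1 by auto
  have Em1: "E (-1) = (\<lambda>p. 0)"
  proof
    fix p
    have "of_int (1 - (-1)) * E (1 + -1) p = act \<alpha> \<beta> 1 (E (-1)) p - act \<alpha> \<beta> (-1) (E 1) p"
      by (rule der_inst[OF d])
    then have "\<forall>p. act \<alpha> \<beta> 1 (E (-1)) p = 0" 
      using der_inst[OF d, of 1 "-1"] by (simp add: E0 E1 act_zero)
    then show "E (-1) p = 0" using inj1[OF fs[rule_format] _ ni] by blast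
  qed
  have pos: "E (int k) = (\<lambda>p. 0)" for k
  proof (induction k)
    case 0 then show ?case using E0 by simp
  next
    case (Suc k)
    show ?case
    proof (cases "k = 0")
      case True then show ?thesis using E1 by simp
    next
      case False
      have "\<forall>p. act \<alpha> \<beta> (-1) (E (int k + 1)) p = 0"
      proof
        fix p
        have "of_int (-1 - (int k + 1)) * E (-1 + (int k + 1)) p = act \<alpha> \<beta> (-1) (E (int k + 1)) p - act \<alpha> \<beta> (int k + 1) (E (-1)) p"
          by (rule der_inst[OF d])
        then show "act \<alpha> \<beta> (-1) (E (int k + 1)) p = 0" using Suc.IH by (simp add: Em1 act_zero)
      qed
      then show ?thesis using injm1[OF fs[rule_format] _ ni] by (auto simp: add.commute)
    qed
  qed
  have neg: "E (- int k) = (\<lambda>p. 0)" for k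
  proof (induction k)
    case 0 then show ?case using E0 by simp
  next
    case (Suc k)
    have "\<forall>p. act \<alpha> \<beta> 1 (E (- int k - 1)) p = 0"
    proof
      fix p
      have "of_int (1 - (- int k - 1)) * E (1 + (- int k - 1)) p = act \<alpha> \<beta> 1 (E (- int k - 1)) p - act \<alpha> \<beta> (- int k - 1) (E 1) p"
        by (rule der_inst[OF d])
      then show "act \<alpha> \<beta> 1 (E (- int k - 1)) p = 0" using Suc.IH by (simp add: E1 act_zero)
    qed
    then have "E (- int k - 1) = (\<lambda>p. 0)" using inj1[OF fs[rule_format] _ ni] by blast
    moreover have "- int (Suc k) = - int k - 1" by simp
    ultimately show ?case by metis
  qed
  show ?thesis
  proof (cases "n \<ge> 0")
    case True then obtain k where "n = int k" using nonneg_eq_int by blast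
    then show ?thesis using pos by simp
  next
    case False then obtain k where "n = - int k" by (metis minus_minus neg_0_le_iff_le nle_le nonneg_eq_int)
    then show ?thesis using neg by simp
  qed
qed

lemma homog:
  assumes d: "der_pt \<alpha> \<beta> E" and fs: "\<forall>n. fin_supp (E n)"
    and w0: "\<forall>a b. a + b \<noteq> 0 \<longrightarrow> E 0 (a,b) = 0" and ni: "\<not> (\<alpha> \<in> \<int> \<and> \<beta> \<in> \<int>)"
  shows "\<forall>n a b. a + b \<noteq> n \<longrightarrow> E n (a,b) = 0" and "\<forall>p. E 0 p = 0"
proof -
  show H: "\<forall>n a b. a + b \<noteq> n \<longrightarrow> E n (a,b) = 0"
  proof (intro allI impI)
    fix n a b :: int assume ne: "a + b \<noteq> n"
    have e: "of_int (0 - n) * E (0 + n) (a,b) = act \<alpha> \<beta> 0 (E n) (a,b) - act \<alpha> \<beta> n (E 0) (a,b)"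
      by (rule der_inst[OF d])
    have z1: "E 0 (a - n, b) = 0" "E 0 (a, b - n) = 0" using w0 ne by auto
    have "of_int (a + b - n) * E n (a,b) = 0" using e z1 by (simp add: act_ab algebra_simps)
    moreover have "(of_int (a + b - n) :: complex) \<noteq> 0" using ne by (simp only: of_int_eq_0_iff)
    ultimately show "E n (a,b) = 0" by simp
  qed
  have "\<forall>p. act \<alpha> \<beta> 1 (E 0) p = 0"
  proof
    fix p show "act \<alpha> \<beta> 1 (E 0) p = 0"
    proof (cases p)
      case (Pair a b)
      show ?thesis
      proof (cases "a + b = 1")
        case True
        have e: "of_int (0 - 1) * E (0 + 1) (a,b) = act \<alpha> \<beta> 0 (E 1) (a,b) - act \<alpha> \<beta> 1 (E 0) (a,b)"
          by (rule der_inst[OF d])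
        have "of_int (1 - (a + b)) * E 1 (a,b) = act \<alpha> \<beta> 1 (E 0) (a,b)" using e by (simp add: act_ab algebra_simps)
        then show ?thesis using True Pair by simp
      next
        case False
        have z1: "E 0 (a - 1, b) = 0" "E 0 (a, b - 1) = 0" using w0 False by auto
        then show ?thesis using Pair by (simp add: act_ab)
      qed
    qed
  qed
  then show "\<forall>p. E 0 p = 0" using inj1[OF fs[rule_format] _ ni] by blast
qed

definition act1 :: "complex \<Rightarrow> complex \<Rightarrow> int \<Rightarrow> int \<Rightarrow> (int \<Rightarrow> complex) \<Rightarrow> int \<Rightarrow> complex" where
  "act1 \<alpha> \<beta> m n x a = - (of_int (a - m) + \<alpha> * of_int m) * x (a - m) + (of_int (a - n) - \<beta> * of_int m) * x a"

definition fin1 :: "(int \<Rightarrow> complex) \<Rightarrow> bool" where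
  "fin1 x \<longleftrightarrow> finite {a. x a \<noteq> 0}"

definition rel1 :: "complex \<Rightarrow> complex \<Rightarrow> (int \<Rightarrow> int \<Rightarrow> complex) \<Rightarrow> bool" where
  "rel1 \<alpha> \<beta> y \<longleftrightarrow> (\<forall>m n a. of_int (m - n) * y (m + n) a = act1 \<alpha> \<beta> m n (y n) a - act1 \<alpha> \<beta> n m (y m) a)"

lemma rel1_inst: "rel1 \<alpha> \<beta> y \<Longrightarrow> of_int (m - n) * y (m + n) a = act1 \<alpha> \<beta> m n (y n) a - act1 \<alpha> \<beta> n m (y m) a"
  unfolding rel1_def by blast

lemma act_diag: "act \<alpha> \<beta> m u (a, m + n - a) = act1 \<alpha> \<beta> m n (\<lambda>a. u (a, n - a)) a"
proof -
  have e: "m + n - a - m = n - a" "m + n - a = n - (a - m)" by auto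
  show ?thesis unfolding act_ab act1_def e by (simp add: algebra_simps)
qed

lemma diag_rel: "der_pt \<alpha> \<beta> E \<Longrightarrow> rel1 \<alpha> \<beta> (\<lambda>n a. E n (a, n - a))"
  unfolding rel1_def
proof (intro allI)
  fix m n a assume d: "der_pt \<alpha> \<beta> E"
  have "of_int (m - n) * E (m + n) (a, m + n - a) = act \<alpha> \<beta> m (E n) (a, m + n - a) - act \<alpha> \<beta> n (E m) (a, m + n - a)"
    by (rule der_inst[OF d])
  also have "\<dots> = act1 \<alpha> \<beta> m n (\<lambda>a. E n (a, n - a)) a - act1 \<alpha> \<beta> n m (\<lambda>a. E m (a, m - a)) a"
    using act_diag[where \<alpha>=\<alpha> and \<beta>=\<beta> and m=m and u="E n" and n=n and a=a]
      act_diag[where \<alpha>=\<alpha> and \<beta>=\<beta> and m=n and u="E m" and n=m and a=a] by (simp add: add.commute)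
  finally show "of_int (m - n) * E (m + n) (a, m + n - a) = act1 \<alpha> \<beta> m n (\<lambda>a. E n (a, n - a)) a - act1 \<alpha> \<beta> n m (\<lambda>a. E m (a, m - a)) a" .
qed

lemma diag_fin: "fin_supp u \<Longrightarrow> fin1 (\<lambda>a. u (a, n - a))"
  unfolding fin_supp_def fin1_def
  by (rule finite_subset[of _ "fst ` {p. u p \<noteq> 0}"]) (auto intro: image_eqI[where x="(_, n - _)"])

lemma lift_fin: "fin1 w \<Longrightarrow> fin_supp (\<lambda>(a,b). if a + b = k then w a else 0)"
  unfolding fin_supp_def fin1_def
  by (rule finite_subset[of _ "(\<lambda>a. (a, k - a)) ` {a. w a \<noteq> 0}"]) (auto split: if_splits)

lemma act_lift: "act \<alpha> \<beta> m (\<lambda>(a,b). if a + b = k then x a else 0) (a,b) = (if a + b = m + k then act1 \<alpha> \<beta> m k x a else 0)"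
proof (cases "a + b = m + k")
  case True
  then have b: "b = m + k - a" by simp
  show ?thesis unfolding b by (simp add: act_ab act1_def algebra_simps)
next
  case False then show ?thesis by (simp add: act_ab act1_def algebra_simps)
qed

lemma act1_diff: "act1 \<alpha> \<beta> m n (\<lambda>a. u a - v a) a = act1 \<alpha> \<beta> m n u a - act1 \<alpha> \<beta> m n v a"
  by (simp add: act1_def algebra_simps)
lemma act1_add: "act1 \<alpha> \<beta> m n (\<lambda>a. u a + v a) a = act1 \<alpha> \<beta> m n u a + act1 \<alpha> \<beta> m n v a"
  by (simp add: act1_def algebra_simps)
lemma act1_scale: "act1 \<alpha> \<beta> m n (\<lambda>a. c * u a) a = c * act1 \<alpha> \<beta> m n u a"
  by (simp add: act1_def algebra_simps)
lemma act1_zero: "act1 \<alpha> \<beta> m n (\<lambda>a. 0) a = 0"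
  by (simp add: act1_def)

lemma act1_module: "act1 \<alpha> \<beta> m n (act1 \<alpha> \<beta> n 0 w) a - act1 \<alpha> \<beta> n m (act1 \<alpha> \<beta> m 0 w) a
    = of_int (m - n) * act1 \<alpha> \<beta> (m + n) 0 w a"
proof -
  have e: "a - m - n = a - (m + n)" "a - n - m = a - (m + n)" by auto
  show ?thesis unfolding act1_def e by (simp add: algebra_simps)
qed

lemma rel1_sub_inner: "rel1 \<alpha> \<beta> y \<Longrightarrow> rel1 \<alpha> \<beta> (\<lambda>n a. y n a - act1 \<alpha> \<beta> n 0 w a)"
  unfolding rel1_def
proof (intro allI)
  fix m n a assume r: "\<forall>m n a. of_int (m - n) * y (m + n) a = act1 \<alpha> \<beta> m n (y n) a - act1 \<alpha> \<beta> n m (y m) a"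
  show "of_int (m - n) * (y (m + n) a - act1 \<alpha> \<beta> (m + n) 0 w a) =
       act1 \<alpha> \<beta> m n (\<lambda>a. y n a - act1 \<alpha> \<beta> n 0 w a) a - act1 \<alpha> \<beta> n m (\<lambda>a. y m a - act1 \<alpha> \<beta> m 0 w a) a"
    using r[rule_format, of m n a] act1_module[of \<alpha> \<beta> m n w a]
    by (simp add: act1_diff algebra_simps)
qed

lemma fin1_diff: "fin1 u \<Longrightarrow> fin1 v \<Longrightarrow> fin1 (\<lambda>a. u a - v a)"
  unfolding fin1_def by (rule finite_subset[of _ "{p. u p \<noteq> 0} \<union> {p. v p \<noteq> 0}"]) auto
lemma fin1_add: "fin1 u \<Longrightarrow> fin1 v \<Longrightarrow> fin1 (\<lambda>a. u a + v a)"
  unfolding fin1_def by (rule finite_subset[of _ "{p. u p \<noteq> 0} \<union> {p. v p \<noteq> 0}"]) auto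
lemma fin1_delta: "fin1 (\<lambda>a. if a = j then s else 0)"
  unfolding fin1_def by (rule finite_subset[of _ "{j}"]) auto
lemma fin1_act1: "fin1 u \<Longrightarrow> fin1 (act1 \<alpha> \<beta> m n u)"
  unfolding fin1_def act1_def
  by (rule finite_subset[of _ "(\<lambda>a. a + m) ` {p. u p \<noteq> 0} \<union> {p. u p \<noteq> 0}"])
     (auto intro: image_eqI[where x="_ - m"])

lemma fin1_bounds:
  assumes "fin1 x" and "x j \<noteq> 0"
  shows "\<exists>q\<ge>j. x q \<noteq> 0 \<and> (\<forall>a>q. x a = 0)" and "\<exists>p\<le>j. x p \<noteq> 0 \<and> (\<forall>a<p. x a = 0)"
proof -
  define S where "S = {a. x a \<noteq> 0}"
  have fS: "finite S" and jS: "j \<in> S" using assms by (auto simp: fin1_def S_def)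
  show "\<exists>q\<ge>j. x q \<noteq> 0 \<and> (\<forall>a>q. x a = 0)"
    apply (rule exI[of _ "Max S"])
    using Max_in[OF fS] Max_ge[OF fS] jS by (force simp: S_def)
  show "\<exists>p\<le>j. x p \<noteq> 0 \<and> (\<forall>a<p. x a = 0)"
    apply (rule exI[of _ "Min S"])
    using Min_in[OF fS] Min_le[OF fS] jS by (force simp: S_def)
qed

lemma fin1_bound: assumes "fin1 x" shows "\<exists>R\<ge>0. \<forall>a. x a \<noteq> 0 \<longrightarrow> - R \<le> a \<and> a \<le> R"
proof -
  define S where "S = {a. x a \<noteq> 0}"
  have fS: "finite S" using assms by (auto simp: fin1_def S_def)
  define R where "R = Max (insert 0 (abs ` S))"
  have "\<forall>a\<in>S. \<bar>a\<bar> \<le> R" unfolding R_def using fS by auto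
  moreover have "0 \<le> R" unfolding R_def using fS by auto
  ultimately have "0 \<le> R \<and> (\<forall>a. x a \<noteq> 0 \<longrightarrow> - R \<le> a \<and> a \<le> R)" by (auto simp: S_def abs_le_iff)
  then show ?thesis by blast
qed

lemma fin1_zero: "fin1 (\<lambda>a. 0)" by (simp add: fin1_def)

lemma act1_delta: "act1 \<alpha> \<beta> 1 0 (\<lambda>a. if a = j then s else 0) a =
   (if a = j + 1 then - (of_int j + \<alpha>) * s else 0) + (if a = j then (of_int j - \<beta>) * s else 0)"
  by (auto simp: act1_def)

lemma red_down:
  assumes na: "\<alpha> \<notin> \<int>"
  shows "\<forall>r. (\<forall>a. r a \<noteq> 0 \<longrightarrow> K \<le> a \<and> a \<le> K + int N) \<longrightarrow>
     (\<exists>w c. fin1 w \<and> (\<forall>a. r a = act1 \<alpha> \<beta> 1 0 w a + (if a = K then c else 0)))"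
proof (induction N)
  case 0
  show ?case
  proof (intro allI impI)
    fix r :: "int \<Rightarrow> complex" assume h: "\<forall>a. r a \<noteq> 0 \<longrightarrow> K \<le> a \<and> a \<le> K + int 0"
    have "\<forall>a. r a = act1 \<alpha> \<beta> 1 0 (\<lambda>a. 0) a + (if a = K then r K else 0)"
      using h by (auto simp: act1_zero)
    then show "\<exists>w c. fin1 w \<and> (\<forall>a. r a = act1 \<alpha> \<beta> 1 0 w a + (if a = K then c else 0))"
      using fin1_zero by blast
  qed
next
  case (Suc N)
  show ?case
  proof (intro allI impI)
    fix r :: "int \<Rightarrow> complex" assume h: "\<forall>a. r a \<noteq> 0 \<longrightarrow> K \<le> a \<and> a \<le> K + int (Suc N)"
    define j where "j = K + int N"
    have jn: "of_int j + \<alpha> \<noteq> 0" using na not_both_int_a by blast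
    define s where "s = - r (j + 1) / (of_int j + \<alpha>)"
    define \<delta> where "\<delta> = (\<lambda>a. if a = j then s else 0)"
    define r' where "r' = (\<lambda>a. r a - act1 \<alpha> \<beta> 1 0 \<delta> a)"
    have "\<forall>a. r' a \<noteq> 0 \<longrightarrow> K \<le> a \<and> a \<le> K + int N"
    proof (intro allI impI)
      fix a assume ra: "r' a \<noteq> 0"
      have "a \<noteq> j + 1"
      proof
        assume "a = j + 1"
        then have "r' a = r (j+1) + (of_int j + \<alpha>) * s" unfolding r'_def \<delta>_def by (simp add: act1_delta algebra_simps)
        also have "\<dots> = 0" unfolding s_def using jn by simp
        finally show False using ra by simp
      qed
      moreover have "a \<le> j + 1"
      proof (rule ccontr)
        assume "\<not> a \<le> j + 1"
        then have "r a = 0" using h unfolding j_def by auto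
        moreover have "act1 \<alpha> \<beta> 1 0 \<delta> a = 0" unfolding \<delta>_def using \<open>\<not> a \<le> j + 1\<close> by (auto simp: act1_delta)
        ultimately show False using ra unfolding r'_def by simp
      qed
      moreover have "K \<le> a"
      proof (rule ccontr)
        assume "\<not> K \<le> a"
        then have "r a = 0" using h unfolding j_def by auto
        moreover have "act1 \<alpha> \<beta> 1 0 \<delta> a = 0" unfolding \<delta>_def j_def using \<open>\<not> K \<le> a\<close> by (auto simp: act1_delta)
        ultimately show False using ra unfolding r'_def by simp
      qed
      ultimately show "K \<le> a \<and> a \<le> K + int N" unfolding j_def by auto
    qed
    then obtain w c where w: "fin1 w" and rw: "\<forall>a. r' a = act1 \<alpha> \<beta> 1 0 w a + (if a = K then c else 0)"
      using Suc.IH by blast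
    have "\<forall>a. r a = act1 \<alpha> \<beta> 1 0 (\<lambda>a. w a + \<delta> a) a + (if a = K then c else 0)"
    proof
      fix a
      have "r a = r' a + act1 \<alpha> \<beta> 1 0 \<delta> a" unfolding r'_def by simp
      then show "r a = act1 \<alpha> \<beta> 1 0 (\<lambda>a. w a + \<delta> a) a + (if a = K then c else 0)"
        using rw by (simp add: act1_add)
    qed
    moreover have "fin1 (\<lambda>a. w a + \<delta> a)" unfolding \<delta>_def using w fin1_delta by (rule fin1_add)
    ultimately show "\<exists>w c. fin1 w \<and> (\<forall>a. r a = act1 \<alpha> \<beta> 1 0 w a + (if a = K then c else 0))" by blast
  qed
qed

lemma red_up:
  assumes nb: "\<beta> \<notin> \<int>"
  shows "\<forall>r. (\<forall>a. r a \<noteq> 0 \<longrightarrow> K - int N \<le> a \<and> a \<le> K) \<longrightarrow>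
     (\<exists>w c. fin1 w \<and> (\<forall>a. r a = act1 \<alpha> \<beta> 1 0 w a + (if a = K then c else 0)))"
proof (induction N)
  case 0
  show ?case
  proof (intro allI impI)
    fix r :: "int \<Rightarrow> complex" assume h: "\<forall>a. r a \<noteq> 0 \<longrightarrow> K - int 0 \<le> a \<and> a \<le> K"
    have "\<forall>a. r a = act1 \<alpha> \<beta> 1 0 (\<lambda>a. 0) a + (if a = K then r K else 0)"
      using h by (auto simp: act1_zero)
    then show "\<exists>w c. fin1 w \<and> (\<forall>a. r a = act1 \<alpha> \<beta> 1 0 w a + (if a = K then c else 0))"
      using fin1_zero by blast
  qed
next
  case (Suc N)
  show ?case
  proof (intro allI impI)
    fix r :: "int \<Rightarrow> complex" assume h: "\<forall>a. r a \<noteq> 0 \<longrightarrow> K - int (Suc N) \<le> a \<and> a \<le> K"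
    define j where "j = K - int N - 1"
    have jn: "of_int j - \<beta> \<noteq> 0" using nb int_of_sub by blast
    define s where "s = r j / (of_int j - \<beta>)"
    define \<delta> where "\<delta> = (\<lambda>a. if a = j then s else 0)"
    define r' where "r' = (\<lambda>a. r a - act1 \<alpha> \<beta> 1 0 \<delta> a)"
    have "\<forall>a. r' a \<noteq> 0 \<longrightarrow> K - int N \<le> a \<and> a \<le> K"
    proof (intro allI impI)
      fix a assume ra: "r' a \<noteq> 0"
      have "a \<noteq> j"
      proof
        assume "a = j"
        then have "r' a = r j - (of_int j - \<beta>) * s" unfolding r'_def \<delta>_def by (simp add: act1_delta)
        also have "\<dots> = 0" unfolding s_def using jn by simp
        finally show False using ra by simp
      qed
      moreover have "j \<le> a"
      proof (rule ccontr)
        assume "\<not> j \<le> a"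
        then have "r a = 0" using h unfolding j_def by auto
        moreover have "act1 \<alpha> \<beta> 1 0 \<delta> a = 0" unfolding \<delta>_def using \<open>\<not> j \<le> a\<close> by (auto simp: act1_delta)
        ultimately show False using ra unfolding r'_def by simp
      qed
      moreover have "a \<le> K"
      proof (rule ccontr)
        assume "\<not> a \<le> K"
        then have "r a = 0" using h unfolding j_def by auto
        moreover have "act1 \<alpha> \<beta> 1 0 \<delta> a = 0" unfolding \<delta>_def j_def using \<open>\<not> a \<le> K\<close> by (auto simp: act1_delta)
        ultimately show False using ra unfolding r'_def by simp
      qed
      ultimately show "K - int N \<le> a \<and> a \<le> K" unfolding j_def by auto
    qed
    then obtain w c where w: "fin1 w" and rw: "\<forall>a. r' a = act1 \<alpha> \<beta> 1 0 w a + (if a = K then c else 0)"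
      using Suc.IH by blast
    have "\<forall>a. r a = act1 \<alpha> \<beta> 1 0 (\<lambda>a. w a + \<delta> a) a + (if a = K then c else 0)"
    proof
      fix a
      have "r a = r' a + act1 \<alpha> \<beta> 1 0 \<delta> a" unfolding r'_def by simp
      then show "r a = act1 \<alpha> \<beta> 1 0 (\<lambda>a. w a + \<delta> a) a + (if a = K then c else 0)"
        using rw by (simp add: act1_add)
    qed
    moreover have "fin1 (\<lambda>a. w a + \<delta> a)" unfolding \<delta>_def using w fin1_delta by (rule fin1_add)
    ultimately show "\<exists>w c. fin1 w \<and> (\<forall>a. r a = act1 \<alpha> \<beta> 1 0 w a + (if a = K then c else 0))" by blast
  qed
qed

lemma act1_p1m1: "act1 \<alpha> \<beta> 1 (-1) z a = -(of_int a - 1 + \<alpha>) * z (a - 1) + (of_int a + 1 - \<beta>) * z a"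
  by (simp add: act1_def)
lemma act1_m1p1: "act1 \<alpha> \<beta> (-1) 1 x a = -(of_int a + 1 - \<alpha>) * x (a + 1) + (of_int a - 1 + \<beta>) * x a"
  by (simp add: act1_def)
lemma act1_m1p2: "act1 \<alpha> \<beta> (-1) 2 x a = -(of_int a + 1 - \<alpha>) * x (a + 1) + (of_int a - 2 + \<beta>) * x a"
  by (simp add: act1_def)
lemma act1_p2m1: "act1 \<alpha> \<beta> 2 (-1) x a = -(of_int a - 2 + 2 * \<alpha>) * x (a - 2) + (of_int a + 1 - 2 * \<beta>) * x a"
  by (simp add: act1_def algebra_simps)

lemma y1:
  assumes fz: "fin1 z"
    and eq: "\<forall>a. act1 \<alpha> \<beta> 1 (-1) z a = act1 \<alpha> \<beta> (-1) 1 (\<lambda>a. if a = K then c else 0) a"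
    and c1: "\<forall>j\<ge>K. of_int j + \<alpha> \<noteq> 0" and c2: "\<forall>j\<le>K-2. of_int j + 1 - \<beta> \<noteq> 0"
  shows "\<forall>a. a \<noteq> K - 1 \<longrightarrow> z a = 0"
    and "(of_int K - \<beta>) * z (K - 1) = c * (\<alpha> - of_int K)"
    and "- (of_int K - 1 + \<alpha>) * z (K - 1) = c * (of_int K - 1 + \<beta>)"
proof -
  have up: "z j = 0" if "j \<ge> K" for j
  proof (rule ccontr)
    assume "z j \<noteq> 0"
    then obtain q where q: "q \<ge> j" "z q \<noteq> 0" "\<forall>a>q. z a = 0" using fin1_bounds(1)[OF fz] by blast
    have "act1 \<alpha> \<beta> 1 (-1) z (q + 1) = act1 \<alpha> \<beta> (-1) 1 (\<lambda>a. if a = K then c else 0) (q + 1)" using eq by blast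
    then have "(of_int q + \<alpha>) * z q = 0" using q that by (simp add: act1_p1m1 act1_m1p1) auto
    moreover have "of_int q + \<alpha> \<noteq> 0" using c1 q(1) that by (meson order_trans)
    ultimately show False using q(2) by simp
  qed
  have down: "z j = 0" if "j \<le> K - 2" for j
  proof (rule ccontr)
    assume "z j \<noteq> 0"
    then obtain p where p: "p \<le> j" "z p \<noteq> 0" "\<forall>a<p. z a = 0" using fin1_bounds(2)[OF fz] by blast
    have "act1 \<alpha> \<beta> 1 (-1) z p = act1 \<alpha> \<beta> (-1) 1 (\<lambda>a. if a = K then c else 0) p" using eq by blast
    then have "(of_int p + 1 - \<beta>) * z p = 0" using p that by (simp add: act1_p1m1 act1_m1p1)
    then show False using p c2 that by auto
  qed
  show "\<forall>a. a \<noteq> K - 1 \<longrightarrow> z a = 0"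
  proof (intro allI impI)
    fix a assume "a \<noteq> K - 1"
    then have "a \<ge> K \<or> a \<le> K - 2" by auto
    then show "z a = 0" using up down by blast
  qed
  have "act1 \<alpha> \<beta> 1 (-1) z (K - 1) = act1 \<alpha> \<beta> (-1) 1 (\<lambda>a. if a = K then c else 0) (K - 1)" using eq by blast
  moreover have "z (K - 2) = 0" using down by simp
  ultimately show "(of_int K - \<beta>) * z (K - 1) = c * (\<alpha> - of_int K)"
    by (simp add: act1_p1m1 act1_m1p1 algebra_simps)
  have "act1 \<alpha> \<beta> 1 (-1) z K = act1 \<alpha> \<beta> (-1) 1 (\<lambda>a. if a = K then c else 0) K" using eq by blast
  moreover have "z K = 0" using up by simp
  ultimately show "- (of_int K - 1 + \<alpha>) * z (K - 1) = c * (of_int K - 1 + \<beta>)"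
    by (simp add: act1_p1m1 act1_m1p1 algebra_simps)
qed

lemma y1_consequence:
  fixes k s c \<alpha> \<beta> :: complex
  assumes "(k - \<beta>) * s = c * (\<alpha> - k)"
    and "- (k - 1 + \<alpha>) * s = c * (k - 1 + \<beta>)"
  shows "c * ((\<alpha> - \<beta>) * (\<alpha> + \<beta> - 1)) = 0"
proof -
  have "(k - 1 + \<alpha>) * ((k - \<beta>) * s) + (k - \<beta>) * (- (k - 1 + \<alpha>) * s) = 0" by (simp add: algebra_simps)
  then have "(k - 1 + \<alpha>) * (c * (\<alpha> - k)) + (k - \<beta>) * (c * (k - 1 + \<beta>)) = 0" using assms by simp
  then show ?thesis by (simp add: algebra_simps power2_eq_square)
qed

lemma y2_poly:
  fixes k A B c \<beta> :: complex
  assumes "(k - \<beta>) * A = (k - 2 * \<beta>) * c"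
    and "(k - 2 + \<beta>) * A - (k + 1 - \<beta>) * B = - 3 * c"
    and "(k - 1 + \<beta>) * B = (k - 1 + 2 * \<beta>) * c"
  shows "c * (\<beta> * (\<beta> - 1) * (2 * \<beta> - 1)) = 0"
  using assms by algebra

lemma nz_add: "\<beta> \<notin> \<int> \<Longrightarrow> of_int j + (\<beta>::complex) \<noteq> 0"
  using not_both_int_a by blast
lemma nz_sub: "\<beta> \<notin> \<int> \<Longrightarrow> of_int j - (\<beta>::complex) \<noteq> 0"
  using int_of_sub by blast

lemma y2:
  assumes fx: "fin1 x" and na: "\<alpha> \<notin> \<int>" and nb: "\<beta> \<notin> \<int>"
    and eq: "\<forall>a. - 3 * y a = act1 \<alpha> \<beta> (-1) 2 x a - act1 \<alpha> \<beta> 2 (-1) z a"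
    and z: "\<forall>a. z a = (if a = K - 1 then - c else 0)" and y: "\<forall>a. y a = (if a = K then c else 0)"
    and ab: "\<alpha> = \<beta>"
  shows "c * (\<beta> * (\<beta> - 1) * (2 * \<beta> - 1)) = 0"
proof -
  have up: "x j = 0" if "j > K + 1" for j
  proof (rule ccontr)
    assume "x j \<noteq> 0"
    then obtain q where q: "q \<ge> j" "x q \<noteq> 0" "\<forall>a>q. x a = 0" using fin1_bounds(1)[OF fx] by blast
    have "- 3 * y q = act1 \<alpha> \<beta> (-1) 2 x q - act1 \<alpha> \<beta> 2 (-1) z q" using eq by blast
    moreover have "y q = 0" "z q = 0" "z (q - 2) = 0" "x (q + 1) = 0" using y z q that by auto
    ultimately have "(of_int (q - 2) + \<beta>) * x q = 0" by (simp add: act1_m1p2 act1_p2m1)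
    moreover have "of_int (q - 2) + \<beta> \<noteq> 0" using nz_add[OF nb] .
    ultimately show False using q(2) by simp
  qed
  have down: "x j = 0" if "j < K" for j
  proof (rule ccontr)
    assume "x j \<noteq> 0"
    then obtain p where p: "p \<le> j" "x p \<noteq> 0" "\<forall>a<p. x a = 0" using fin1_bounds(2)[OF fx] by blast
    have "- 3 * y (p - 1) = act1 \<alpha> \<beta> (-1) 2 x (p - 1) - act1 \<alpha> \<beta> 2 (-1) z (p - 1)" using eq by blast
    moreover have "y (p - 1) = 0" "z (p - 1) = 0" "z (p - 1 - 2) = 0" "x (p - 1) = 0" using y z p that by auto
    ultimately have "(of_int p - \<alpha>) * x p = 0" by (simp add: act1_m1p2 act1_p2m1) auto
    moreover have "of_int p - \<alpha> \<noteq> 0" using nz_sub[OF na] .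
    ultimately show False using p(2) by simp
  qed
  define k where "k = (of_int K :: complex)"
  have e1: "- 3 * y (K - 1) = act1 \<alpha> \<beta> (-1) 2 x (K - 1) - act1 \<alpha> \<beta> 2 (-1) z (K - 1)" using eq by blast
  have e2: "- 3 * y K = act1 \<alpha> \<beta> (-1) 2 x K - act1 \<alpha> \<beta> 2 (-1) z K" using eq by blast
  have e3: "- 3 * y (K + 1) = act1 \<alpha> \<beta> (-1) 2 x (K + 1) - act1 \<alpha> \<beta> 2 (-1) z (K + 1)" using eq by blast
  have x1: "x (K - 1) = 0" "x (K + 2) = 0" using up down by auto
  have zv: "z (K - 1 - 2) = 0" "z (K - 1) = - c" "z (K - 2) = 0" "z K = 0" "z (K + 1) = 0" "z (K + 1 - 2) = - c"
    using z by auto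
  have yv: "y (K - 1) = 0" "y K = c" "y (K + 1) = 0" using y by auto
  have E1: "(k - \<beta>) * x K = (k - 2 * \<beta>) * c"
    using e1 x1 zv yv ab unfolding k_def by (simp add: act1_m1p2 act1_p2m1 algebra_simps)
  have E2: "(k - 2 + \<beta>) * x K - (k + 1 - \<beta>) * x (K + 1) = - 3 * c"
    using e2 x1 zv yv ab unfolding k_def by (simp add: act1_m1p2 act1_p2m1 algebra_simps)
  have E3: "(k - 1 + \<beta>) * x (K + 1) = (k - 1 + 2 * \<beta>) * c"
    using e3 x1 zv yv ab unfolding k_def by (simp add: act1_m1p2 act1_p2m1 algebra_simps)
  show ?thesis using y2_poly[OF E1 E2 E3] .
qed

lemma act1_00: "act1 \<alpha> \<beta> 0 0 w a = 0" by (simp add: act1_def)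

lemma core:
  assumes ni: "\<not> (\<alpha> \<in> \<int> \<and> \<beta> \<in> \<int>)" and r: "rel1 \<alpha> \<beta> y" and fy: "\<forall>n. fin1 (y n)"
    and y0: "\<forall>a. y 0 a = 0"
  shows "\<exists>w c. fin1 w \<and> (\<forall>a. y 1 a = act1 \<alpha> \<beta> 1 0 w a + (if a = 0 then c else 0)) \<and> (\<alpha> + \<beta> \<noteq> 1 \<longrightarrow> c = 0)"
proof -
  obtain R where R0: "R \<ge> 0" and Rb: "\<forall>a. y 1 a \<noteq> 0 \<longrightarrow> - R \<le> a \<and> a \<le> R"
    using fin1_bound[OF fy[rule_format, of 1]] by blast
  show ?thesis
  proof (cases "\<alpha> + \<beta> = 1")
    case True
    have nb: "\<beta> \<notin> \<int>"
    proof
      assume "\<beta> \<in> \<int>"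
      moreover have "\<alpha> = 1 - \<beta>" using True by (simp add: algebra_simps)
      ultimately have "\<alpha> \<in> \<int>" by simp
      with \<open>\<beta> \<in> \<int>\<close> ni show False by simp
    qed
    have na: "\<alpha> \<notin> \<int>"
    proof
      assume "\<alpha> \<in> \<int>"
      moreover have "\<beta> = 1 - \<alpha>" using True by (simp add: algebra_simps)
      ultimately have "\<beta> \<in> \<int>" by simp
      with \<open>\<alpha> \<in> \<int>\<close> ni show False by simp
    qed
    have "\<forall>a. y 1 a \<noteq> 0 \<longrightarrow> - R \<le> a \<and> a \<le> - R + int (nat (2 * R))" using Rb R0 by auto
    then obtain w1 c1 where w1: "fin1 w1" and e1: "\<forall>a. y 1 a = act1 \<alpha> \<beta> 1 0 w1 a + (if a = - R then c1 else 0)"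
      using red_down[OF na, of "-R" "nat (2 * R)" \<beta>] by blast
    have "\<exists>w c. fin1 w \<and> (\<forall>a. (if a = - R then c1 else 0) = act1 \<alpha> \<beta> 1 0 w a + (if a = 0 then c else 0))"
      by (rule red_up[OF nb, of 0 "nat R" \<alpha>, rule_format]) (use R0 in \<open>auto split: if_splits\<close>)
    then obtain w2 c2 where w2: "fin1 w2" and e2: "\<forall>a. (if a = - R then c1 else 0) = act1 \<alpha> \<beta> 1 0 w2 a + (if a = 0 then c2 else 0)"
      by blast
    have "\<forall>a. y 1 a = act1 \<alpha> \<beta> 1 0 (\<lambda>a. w1 a + w2 a) a + (if a = 0 then c2 else 0)"
      using e1 e2 by (simp add: act1_add)
    moreover have "fin1 (\<lambda>a. w1 a + w2 a)" using w1 w2 by (rule fin1_add)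
    ultimately show ?thesis using True by blast
  next
    case False
    have "\<exists>K w c. fin1 w \<and> (\<forall>a. y 1 a = act1 \<alpha> \<beta> 1 0 w a + (if a = K then c else 0))
             \<and> (\<forall>j\<ge>K. of_int j + \<alpha> \<noteq> 0) \<and> (\<forall>j\<le>K-2. of_int j + 1 - \<beta> \<noteq> 0)"
    proof (cases "\<alpha> \<in> \<int>")
      case False
      have "\<exists>K\<le>-R. \<forall>j\<le>K-2. of_int j + 1 - \<beta> \<noteq> (0::complex)"
      proof (cases "\<beta> \<in> \<int>")
        case True
        then obtain b0 where b0: "\<beta> = of_int b0" by (auto elim: Ints_cases)
        have "\<forall>j\<le>min (-R) b0 - 2. of_int j + 1 - \<beta> \<noteq> (0::complex)"
        proof (intro allI impI)
          fix j assume "j \<le> min (-R) b0 - 2"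
          then have "j + 1 - b0 \<noteq> 0" by auto
          then have "(of_int (j + 1 - b0) :: complex) \<noteq> 0" by (simp only: of_int_eq_0_iff) simp
          then show "of_int j + 1 - \<beta> \<noteq> (0::complex)" using b0 by simp
        qed
        then show ?thesis by (intro exI[of _ "min (-R) b0"]) auto
      next
        case False
        then show ?thesis using nz_add[OF False] by (intro exI[of _ "-R"]) (auto simp: algebra_simps)
      qed
      then obtain K where K: "K \<le> -R" "\<forall>j\<le>K-2. of_int j + 1 - \<beta> \<noteq> (0::complex)" by blast
      have "\<forall>a. y 1 a \<noteq> 0 \<longrightarrow> K \<le> a \<and> a \<le> K + int (nat (R - K))" using Rb R0 K by auto
      then obtain w c where "fin1 w" "\<forall>a. y 1 a = act1 \<alpha> \<beta> 1 0 w a + (if a = K then c else 0)"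
        using red_down[OF False, of K "nat (R - K)" \<beta>] by blast
      moreover have "\<forall>j\<ge>K. of_int j + \<alpha> \<noteq> 0" using nz_add[OF False] by blast
      ultimately show ?thesis using K by blast
    next
      case True
      then obtain a0 where a0: "\<alpha> = of_int a0" by (auto elim: Ints_cases)
      have nb: "\<beta> \<notin> \<int>" using True ni by blast
      define K where "K = max R (1 - a0)"
      have "\<forall>a. y 1 a \<noteq> 0 \<longrightarrow> K - int (nat (K + R)) \<le> a \<and> a \<le> K" using Rb R0 unfolding K_def by auto
      then obtain w c where "fin1 w" "\<forall>a. y 1 a = act1 \<alpha> \<beta> 1 0 w a + (if a = K then c else 0)"
        using red_up[OF nb, of K "nat (K + R)" \<alpha>] by blast
      moreover have "\<forall>j\<ge>K. of_int j + \<alpha> \<noteq> 0"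
      proof (intro allI impI)
        fix j assume "j \<ge> K"
        then have "j + a0 \<noteq> 0" unfolding K_def by auto
        then have "(of_int (j + a0) :: complex) \<noteq> 0" by (simp only: of_int_eq_0_iff) simp
        then show "of_int j + \<alpha> \<noteq> 0" using a0 by simp
      qed
      moreover have "\<forall>j\<le>K-2. of_int j + 1 - \<beta> \<noteq> 0"
      proof (intro allI impI)
        fix j :: int
        have "of_int (j + 1) - \<beta> \<noteq> 0" using nz_sub[OF nb] .
        then show "of_int j + 1 - \<beta> \<noteq> 0" by simp
      qed
      ultimately show ?thesis by blast
    qed
    then obtain K w c where w: "fin1 w" and ew: "\<forall>a. y 1 a = act1 \<alpha> \<beta> 1 0 w a + (if a = K then c else 0)"
      and c1: "\<forall>j\<ge>K. of_int j + \<alpha> \<noteq> 0" and c2: "\<forall>j\<le>K-2. of_int j + 1 - \<beta> \<noteq> 0" by blast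
    define y' where "y' = (\<lambda>n a. y n a - act1 \<alpha> \<beta> n 0 w a)"
    have r': "rel1 \<alpha> \<beta> y'" unfolding y'_def by (rule rel1_sub_inner[OF r])
    have fy': "fin1 (y' n)" for n unfolding y'_def using fy fin1_act1[OF w] by (intro fin1_diff) auto
    have y'0: "y' 0 a = 0" for a unfolding y'_def using y0 by (simp add: act1_00)
    have y'1: "y' 1 = (\<lambda>a. if a = K then c else 0)" unfolding y'_def using ew by auto
    have eqm: "\<forall>a. act1 \<alpha> \<beta> 1 (-1) (y' (-1)) a = act1 \<alpha> \<beta> (-1) 1 (\<lambda>a. if a = K then c else 0) a"
    proof
      fix a
      have "of_int (1 - (-1)) * y' (1 + (-1)) a = act1 \<alpha> \<beta> 1 (-1) (y' (-1)) a - act1 \<alpha> \<beta> (-1) 1 (y' 1) a"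
        by (rule rel1_inst[OF r'])
      then show "act1 \<alpha> \<beta> 1 (-1) (y' (-1)) a = act1 \<alpha> \<beta> (-1) 1 (\<lambda>a. if a = K then c else 0) a"
        using y'0 y'1 by simp
    qed
    note Y1 = y1[OF fy' eqm c1 c2]
    have cz: "c * ((\<alpha> - \<beta>) * (\<alpha> + \<beta> - 1)) = 0" by (rule y1_consequence[OF Y1(2) Y1(3)])
    have "c = 0"
    proof (cases "\<alpha> = \<beta>")
      case False
      then show ?thesis using cz \<open>\<alpha> + \<beta> \<noteq> 1\<close> by simp
    next
      case True
      then have na: "\<alpha> \<notin> \<int>" and nb: "\<beta> \<notin> \<int>" using ni by auto
      have Kb: "of_int K - \<beta> \<noteq> 0" using nz_sub[OF nb] .
      have "(of_int K - \<beta>) * (y' (-1) (K - 1) + c) = 0" using Y1(2) True by (simp add: algebra_simps)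
      then have zK: "y' (-1) (K - 1) = - c" using Kb by (simp add: add_eq_0_iff2)
      have z: "\<forall>a. y' (-1) a = (if a = K - 1 then - c else 0)" using Y1(1) zK by auto
      have yv: "\<forall>a. y' 1 a = (if a = K then c else 0)" using y'1 by simp
      have eq2: "\<forall>a. - 3 * y' 1 a = act1 \<alpha> \<beta> (-1) 2 (y' 2) a - act1 \<alpha> \<beta> 2 (-1) (y' (-1)) a"
      proof
        fix a
        have "of_int (-1 - 2) * y' (-1 + 2) a = act1 \<alpha> \<beta> (-1) 2 (y' 2) a - act1 \<alpha> \<beta> 2 (-1) (y' (-1)) a"
          by (rule rel1_inst[OF r'])
        then show "- 3 * y' 1 a = act1 \<alpha> \<beta> (-1) 2 (y' 2) a - act1 \<alpha> \<beta> 2 (-1) (y' (-1)) a" by simp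
      qed
      have p: "c * (\<beta> * (\<beta> - 1) * (2 * \<beta> - 1)) = 0" by (rule y2[OF fy' na nb eq2 z yv True])
      have "\<beta> \<noteq> 0" using nb by auto
      moreover have "\<beta> - 1 \<noteq> 0" using nb by auto
      moreover have "2 * \<beta> - 1 \<noteq> 0" using \<open>\<alpha> + \<beta> \<noteq> 1\<close> True by (auto simp: algebra_simps)
      ultimately show ?thesis using p by simp
    qed
    then have "\<forall>a. y 1 a = act1 \<alpha> \<beta> 1 0 w a + (if a = 0 then 0 else 0)" using ew by simp
    then show ?thesis using w by blast
  qed
qed

lemma der_sub_inner: "der_pt \<alpha> \<beta> D \<Longrightarrow> der_pt \<alpha> \<beta> (\<lambda>n p. D n p - act \<alpha> \<beta> n v p)"
  unfolding der_pt_def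
proof (intro allI)
  fix m n p assume d: "\<forall>m n p. of_int (m - n) * D (m + n) p = act \<alpha> \<beta> m (D n) p - act \<alpha> \<beta> n (D m) p"
  show "of_int (m - n) * (D (m + n) p - act \<alpha> \<beta> (m + n) v p) =
     act \<alpha> \<beta> m (\<lambda>p. D n p - act \<alpha> \<beta> n v p) p - act \<alpha> \<beta> n (\<lambda>p. D m p - act \<alpha> \<beta> m v p) p"
    using d[rule_format, of m n p] act_module[of \<alpha> \<beta> m n v p] by (simp add: act_diff algebra_simps)
qed

lemma lin_helper: fixes x dv gv a b a' b' c :: complex
  shows "x * dv = a - b \<Longrightarrow> x * gv = a' - b' \<Longrightarrow> x * (dv - c * gv) = (a - c * a') - (b - c * b')"
  by algebra

lemma der_sub_scale: "der_pt \<alpha> \<beta> D \<Longrightarrow> der_pt \<alpha> \<beta> G \<Longrightarrow> der_pt \<alpha> \<beta> (\<lambda>n p. D n p - c * G n p)"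
  unfolding der_pt_def
proof (intro allI)
  fix m n p assume d: "\<forall>m n p. of_int (m - n) * D (m + n) p = act \<alpha> \<beta> m (D n) p - act \<alpha> \<beta> n (D m) p"
    and g: "\<forall>m n p. of_int (m - n) * G (m + n) p = act \<alpha> \<beta> m (G n) p - act \<alpha> \<beta> n (G m) p"
  show "of_int (m - n) * (D (m + n) p - c * G (m + n) p) =
     act \<alpha> \<beta> m (\<lambda>p. D n p - c * G n p) p - act \<alpha> \<beta> n (\<lambda>p. D m p - c * G m p) p"
    using lin_helper[OF d[rule_format, of m n p] g[rule_format, of m n p], of c]
    by (simp add: act_diff act_scale)
qed

lemma main_reduce:
  assumes ni: "\<not> (\<alpha> \<in> \<int> \<and> \<beta> \<in> \<int>)" and d: "der_pt \<alpha> \<beta> D" and fs: "\<forall>n. fin_supp (D n)"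
  shows "\<exists>v c. fin_supp v \<and> (\<alpha> + \<beta> \<noteq> 1 \<longrightarrow> c = 0) \<and>
     (\<forall>p. D 0 p - act \<alpha> \<beta> 0 v p = 0) \<and>
     (\<forall>a b. D 1 (a,b) - act \<alpha> \<beta> 1 v (a,b) = (if a = 0 \<and> b = 1 then c else 0))"
proof -
  define v1 where "v1 = (\<lambda>(a,b). if a + b = 0 then 0 else - D 0 (a,b) / of_int (a + b))"
  have fv1: "fin_supp v1"
    using fs[rule_format, of 0] unfolding fin_supp_def v1_def
    by (rule finite_subset[rotated]) (auto split: if_splits)
  define E where "E = (\<lambda>n p. D n p - act \<alpha> \<beta> n v1 p)"
  have dE: "der_pt \<alpha> \<beta> E" unfolding E_def by (rule der_sub_inner[OF d])
  have fE: "\<forall>n. fin_supp (E n)" unfolding E_def using fs fin_supp_act[OF fv1] by (auto intro: fin_supp_diff)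
  have w0: "\<forall>a b. a + b \<noteq> 0 \<longrightarrow> E 0 (a,b) = 0"
  proof (intro allI impI)
    fix a b :: int assume ne: "a + b \<noteq> 0"
    then have ne': "(of_int a + of_int b :: complex) \<noteq> 0" by (metis of_int_add of_int_eq_0_iff)
    have "E 0 (a,b) = D 0 (a,b) + (of_int a + of_int b) * v1 (a,b)" unfolding E_def by (simp add: act_ab algebra_simps)
    also have "\<dots> = 0" unfolding v1_def using ne ne' by simp
    finally show "E 0 (a,b) = 0" .
  qed
  note H = homog[OF dE fE w0 ni]
  define y where "y = (\<lambda>n a. E n (a, n - a))"
  have ry: "rel1 \<alpha> \<beta> y" unfolding y_def by (rule diag_rel[OF dE])
  have fy: "\<forall>n. fin1 (y n)" unfolding y_def using fE diag_fin by blast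
  have y0: "\<forall>a. y 0 a = 0" unfolding y_def using H(2) by simp
  obtain w c where w: "fin1 w" and yw: "\<forall>a. y 1 a = act1 \<alpha> \<beta> 1 0 w a + (if a = 0 then c else 0)"
     and cc: "\<alpha> + \<beta> \<noteq> 1 \<longrightarrow> c = 0"
    using core[OF ni ry fy y0] by blast
  define V2 :: "int \<times> int \<Rightarrow> complex" where "V2 = (\<lambda>(a,b). if a + b = 0 then w a else 0)"
  have fV2: "fin_supp V2" unfolding V2_def by (rule lift_fin[OF w])
  define v where "v = (\<lambda>p. v1 p + V2 p)"
  have fv: "fin_supp v" unfolding v_def using fv1 fV2 by (rule fin_supp_add)
  have key: "D n p - act \<alpha> \<beta> n v p = E n p - act \<alpha> \<beta> n V2 p" for n p
    unfolding v_def E_def by (simp add: act_add)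
  have "\<forall>p. D 0 p - act \<alpha> \<beta> 0 v p = 0"
  proof
    fix p show "D 0 p - act \<alpha> \<beta> 0 v p = 0"
    proof (cases p)
      case (Pair a b)
      show ?thesis unfolding key Pair V2_def act_lift using H(2) by (simp add: act1_00)
    qed
  qed
  moreover have "\<forall>a b. D 1 (a,b) - act \<alpha> \<beta> 1 v (a,b) = (if a = 0 \<and> b = 1 then c else 0)"
  proof (intro allI)
    fix a b :: int
    show "D 1 (a,b) - act \<alpha> \<beta> 1 v (a,b) = (if a = 0 \<and> b = 1 then c else 0)"
    proof (cases "a + b = 1")
      case True
      then have b: "b = 1 - a" by simp
      have "E 1 (a, b) = y 1 a" unfolding y_def b by simp
      then show ?thesis unfolding key V2_def act_lift using True yw b by auto
    next
      case False
      then show ?thesis unfolding key V2_def act_lift using H(1) by auto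
    qed
  qed
  ultimately show ?thesis using fv cc by blast
qed

definition ind :: "bool \<Rightarrow> complex" where "ind P = (if P then 1 else 0)"

lemma dcoc_alt: "dcoc \<beta> n (a, b) = (if b = n - a then (of_int a - of_int n * \<beta>) * (ind (0 \<le> a) - ind (n \<le> a)) else 0)"
  unfolding dcoc_def ind_def by auto

lemma dcoc_poly:
  fixes a m n \<beta> x0 xm xn xmn :: complex
  shows "(m - n) * ((a - (m + n) * \<beta>) * (x0 - xmn)) =
   (- (a - m + (1 - \<beta>) * m) * ((a - m - n * \<beta>) * (xm - xmn)) - ((m + n - a) - m + \<beta> * m) * ((a - n * \<beta>) * (x0 - xn)))
 - (- (a - n + (1 - \<beta>) * n) * ((a - n - m * \<beta>) * (xn - xmn)) - ((m + n - a) - n + \<beta> * n) * ((a - m * \<beta>) * (x0 - xm)))"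
  by (simp add: algebra_simps)

lemma dcoc_der: "der_pt (1 - \<beta>) \<beta> (dcoc \<beta>)"
  unfolding der_pt_def
proof (intro allI)
  fix m n :: int and p :: "int \<times> int"
  obtain a b where p: "p = (a, b)" by (cases p)
  show "of_int (m - n) * dcoc \<beta> (m + n) p = act (1 - \<beta>) \<beta> m (dcoc \<beta> n) p - act (1 - \<beta>) \<beta> n (dcoc \<beta> m) p"
  proof (cases "a + b = m + n")
    case False
    then show ?thesis unfolding p act_ab dcoc_alt by auto
  next
    case True
    then have b: "b = m + n - a" by simp
    have i: "ind (0 \<le> a - m) = ind (m \<le> a)" "ind (n \<le> a - m) = ind (m + n \<le> a)"
      "ind (0 \<le> a - n) = ind (n \<le> a)" "ind (m \<le> a - n) = ind (m + n \<le> a)"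
      unfolding ind_def by (auto simp: algebra_simps)
    have c: "(m + n - a = n - (a - m)) = True" "(m + n - a - m = n - a) = True"
       "(m + n - a = m - (a - n)) = True" "(m + n - a - n = m - a) = True" "(m + n - a = m + n - a) = True"
      by auto
    show ?thesis unfolding p b act_ab dcoc_alt c if_True i
      using dcoc_poly[of "of_int m" "of_int n" "of_int a" \<beta> "ind (0 \<le> a)" "ind (m + n \<le> a)" "ind (m \<le> a)" "ind (n \<le> a)"]
      by (simp add: algebra_simps)
  qed
qed

lemma fin_bound_set: "finite (A :: int set) \<Longrightarrow> \<exists>R\<ge>0. \<forall>a\<in>A. - R \<le> a \<and> a \<le> R"
proof -
  assume fA: "finite A"
  define R where "R = Max (insert 0 (abs ` A))"
  have "\<forall>a\<in>A. \<bar>a\<bar> \<le> R" unfolding R_def using fA by auto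
  moreover have "0 \<le> R" unfolding R_def using fA by auto
  ultimately have "0 \<le> R \<and> (\<forall>a\<in>A. - R \<le> a \<and> a \<le> R)" by (auto simp: abs_le_iff)
  then show ?thesis by blast
qed

lemma dcoc_not_inner: "\<not> is_inner \<alpha> \<beta> (dcoc \<beta>)"
proof
  assume "is_inner \<alpha> \<beta> (dcoc \<beta>)"
  then obtain v where fv: "fin_supp v" and dv: "\<forall>n. dcoc \<beta> n = act \<alpha> \<beta> n v" unfolding is_inner_def by blast
  have "finite (fst ` {p. v p \<noteq> 0})" using fv unfolding fin_supp_def by simp
  then obtain R where R0: "R \<ge> 0" and Rb: "\<forall>a\<in>fst ` {p. v p \<noteq> 0}. - R \<le> a \<and> a \<le> R" using fin_bound_set by blast
  have vz: "v (a, b) = 0" if "a > R \<or> a < - R" for a b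
  proof (rule ccontr)
    assume "v (a,b) \<noteq> 0"
    then have "a \<in> fst ` {p. v p \<noteq> 0}" by force
    then show False using Rb that by auto
  qed
  define n where "n = 2 * R + 3"
  have val: "of_int a - of_int n * \<beta> = 0" if "a = R + 1 \<or> a = R + 2" for a
  proof -
    have "dcoc \<beta> n (a, n - a) = act \<alpha> \<beta> n v (a, n - a)" using dv by simp
    moreover have "dcoc \<beta> n (a, n - a) = of_int a - of_int n * \<beta>"
      unfolding dcoc_alt ind_def using that R0 n_def by auto
    moreover have "v (a - n, n - a) = 0" "v (a, n - a - n) = 0" using vz that n_def by auto
    ultimately show ?thesis by (simp add: act_ab)
  qed
  have "of_int (R + 1) - of_int n * \<beta> = 0" "of_int (R + 2) - of_int n * \<beta> = 0"
    using val[of "R+1"] val[of "R+2"] by blast+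
  then have "(of_int (R + 2) :: complex) - of_int (R + 1) = 0" by simp
  then show False by simp
qed

lemma dcoc_fin: "fin_supp (dcoc \<beta> n)"
  unfolding fin_supp_def
proof (rule finite_subset[of _ "(\<lambda>a. (a, n - a)) ` {min 0 n .. max 0 n}"])
  show "{p. dcoc \<beta> n p \<noteq> 0} \<subseteq> (\<lambda>a. (a, n - a)) ` {min 0 n..max 0 n}"
  proof
    fix p assume "p \<in> {p. dcoc \<beta> n p \<noteq> 0}"
    then obtain a b where p: "p = (a,b)" and nz: "dcoc \<beta> n (a,b) \<noteq> 0" by (cases p) auto
    then have "b = n - a" "a \<in> {min 0 n .. max 0 n}" unfolding dcoc_alt ind_def by (auto split: if_splits)
    then show "p \<in> (\<lambda>a. (a, n - a)) ` {min 0 n..max 0 n}" unfolding p by auto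
  qed
qed simp

lemma dcoc1: "dcoc \<beta> 1 (a, b) = (if a = 0 \<and> b = 1 then - \<beta> else 0)"
  unfolding dcoc_def by auto

lemma dcoc0: "dcoc \<beta> 0 p = 0"
  unfolding dcoc_def by (cases p) auto

theorem mainTheorem2:
  fixes \<alpha> \<beta> :: complex
  assumes "\<not> (\<alpha> \<in> \<int> \<and> \<beta> \<in> \<int>)"
  shows "(\<alpha> + \<beta> \<noteq> 1 \<longrightarrow> (\<forall>D. is_der \<alpha> \<beta> D \<longrightarrow> is_inner \<alpha> \<beta> D))
       \<and> (\<alpha> + \<beta> = 1 \<longrightarrow>
            is_der (1 - \<beta>) \<beta> (dcoc \<beta>)
          \<and> \<not> is_inner (1 - \<beta>) \<beta> (dcoc \<beta>)
          \<and> (\<forall>D. is_der (1 - \<beta>) \<beta> D \<longrightarrow>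
               (\<exists>c E. is_inner (1 - \<beta>) \<beta> E \<and> (\<forall>n p. D n p = c * dcoc \<beta> n p + E n p))))"
proof (intro conjI impI allI)
  fix D assume ab: "\<alpha> + \<beta> \<noteq> 1" and D: "is_der \<alpha> \<beta> D"
  then have d: "der_pt \<alpha> \<beta> D" and fs: "\<forall>n. fin_supp (D n)" by (auto simp: is_der_iff)
  obtain v c where fv: "fin_supp v" and cc: "\<alpha> + \<beta> \<noteq> 1 \<longrightarrow> c = 0"
    and g0: "\<forall>p. D 0 p - act \<alpha> \<beta> 0 v p = 0"
    and g1: "\<forall>a b. D 1 (a,b) - act \<alpha> \<beta> 1 v (a,b) = (if a = 0 \<and> b = 1 then c else 0)"
    using main_reduce[OF assms d fs] by blast
  define G where "G = (\<lambda>n p. D n p - act \<alpha> \<beta> n v p)"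
  have dG: "der_pt \<alpha> \<beta> G" unfolding G_def by (rule der_sub_inner[OF d])
  have fG: "\<forall>n. fin_supp (G n)" unfolding G_def using fs fin_supp_act[OF fv] by (auto intro: fin_supp_diff)
  have G0: "\<forall>p. G 0 p = 0" unfolding G_def using g0 by simp
  have G1: "\<forall>p. G 1 p = 0" unfolding G_def using g1 cc ab by auto
  have "\<forall>n. D n = act \<alpha> \<beta> n v"
  proof (intro allI ext)
    fix n p have "G n p = 0" by (rule uniq[OF dG fG G0 G1 assms])
    then show "D n p = act \<alpha> \<beta> n v p" unfolding G_def by simp
  qed
  then show "is_inner \<alpha> \<beta> D" unfolding is_inner_def using fv by blast
next
  assume ab: "\<alpha> + \<beta> = 1"
  then have a: "\<alpha> = 1 - \<beta>" by (simp add: algebra_simps)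
  have ni: "\<not> ((1 - \<beta>) \<in> \<int> \<and> \<beta> \<in> \<int>)" using assms a by simp
  have nb: "\<beta> \<notin> \<int>"
  proof
    assume "\<beta> \<in> \<int>" then have "1 - \<beta> \<in> \<int>" by simp
    with \<open>\<beta> \<in> \<int>\<close> ni show False by simp
  qed
  then have b0: "\<beta> \<noteq> 0" by auto
  show "is_der (1 - \<beta>) \<beta> (dcoc \<beta>)" unfolding is_der_iff using dcoc_fin dcoc_der by blast
  show "\<not> is_inner (1 - \<beta>) \<beta> (dcoc \<beta>)" by (rule dcoc_not_inner)
  fix D assume D: "is_der (1 - \<beta>) \<beta> D"
  then have d: "der_pt (1 - \<beta>) \<beta> D" and fs: "\<forall>n. fin_supp (D n)" by (auto simp: is_der_iff)
  obtain v c where fv: "fin_supp v"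
    and g0: "\<forall>p. D 0 p - act (1 - \<beta>) \<beta> 0 v p = 0"
    and g1: "\<forall>a b. D 1 (a,b) - act (1 - \<beta>) \<beta> 1 v (a,b) = (if a = 0 \<and> b = 1 then c else 0)"
    using main_reduce[OF ni d fs] by blast
  define c2 where "c2 = - c / \<beta>"
  define G where "G = (\<lambda>n p. D n p - act (1 - \<beta>) \<beta> n v p)"
  define H where "H = (\<lambda>n p. G n p - c2 * dcoc \<beta> n p)"
  have dG: "der_pt (1 - \<beta>) \<beta> G" unfolding G_def by (rule der_sub_inner[OF d])
  have dH: "der_pt (1 - \<beta>) \<beta> H" unfolding H_def by (rule der_sub_scale[OF dG dcoc_der])
  have fH: "\<forall>n. fin_supp (H n)" unfolding H_def G_def using fs fin_supp_act[OF fv] dcoc_fin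
    by (auto intro!: fin_supp_diff fin_supp_scale)
  have H0: "\<forall>p. H 0 p = 0" unfolding H_def G_def using g0 by (simp add: dcoc0)
  have H1: "\<forall>p. H 1 p = 0"
  proof
    fix p show "H 1 p = 0"
    proof (cases p)
      case (Pair a b)
      show ?thesis unfolding H_def G_def Pair dcoc1 using g1 b0 unfolding c2_def by auto
    qed
  qed
  have "\<forall>n p. D n p = c2 * dcoc \<beta> n p + act (1 - \<beta>) \<beta> n v p"
  proof (intro allI)
    fix n p have "H n p = 0" by (rule uniq[OF dH fH H0 H1 ni])
    then show "D n p = c2 * dcoc \<beta> n p + act (1 - \<beta>) \<beta> n v p" unfolding H_def G_def by (simp add: algebra_simps)
  qed
  moreover have "is_inner (1 - \<beta>) \<beta> (\<lambda>n. act (1 - \<beta>) \<beta> n v)" unfolding is_inner_def using fv by blast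
  ultimately show "\<exists>c E. is_inner (1 - \<beta>) \<beta> E \<and> (\<forall>n p. D n p = c * dcoc \<beta> n p + E n p)" by blast
qed

end
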